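(* Let $\alpha\ge6$ and $f_\alpha(y)=\sum_{k,l\in\mathbb{Z}}e^{-\pi\alpha\phi_{k,l}(y)}$. Then $f_\alpha''(y)<0$ for all $y\in\big[\tfrac{\sqrt3}2,\tfrac{\sqrt3}2+\tfrac1{3\sqrt\alpha}\big]$.
   Context: For $y>0$ and $(k,l)\in\mathbb{Z}^2$: $\phi_{k,l}(y)=\frac{(2k+l+1)^2}{4y}+y\big(l+\frac12-\frac1{8y^2}\big)^2$. *)

theory Defs
  imports "HOL-Analysis.Analysis"
begin

definition phi :: "int \<Rightarrow> int \<Rightarrow> real \<Rightarrow> real" where
  "phi k l y = (of_int (2*k + l + 1))^2 / (4*y) + y * (of_int l + 1/2 - 1/(8*y^2))^2"

definition f_alpha :: "real \<Rightarrow> real \<Rightarrow> real" where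
  "f_alpha \<alpha> y = (\<Sum>\<^sub>\<infinity>(k,l)\<in>(UNIV :: (int \<times> int) set). exp (- pi * \<alpha> * phi k l y))"

end

theory Submission
  imports Defs
begin
lemma has_sum_geom_int:
  fixes r :: real
  assumes r: "0 \<le> r" "r < 1"
  shows "((\<lambda>k::int. r ^ nat \<bar>k\<bar>) has_sum ((1 + r) / (1 - r))) UNIV"
proof -
  have g: "((\<lambda>n::nat. r ^ n) has_sum (1 / (1 - r))) UNIV"
    using r by (intro sums_nonneg_imp_has_sum) (auto intro: geometric_sums)
  have g2: "((\<lambda>n::nat. r * r ^ n) has_sum (r * (1 / (1 - r)))) UNIV"
    using has_sum_cmult_right[OF g] by simp
  have inj1: "inj (int :: nat \<Rightarrow> int)" by (simp add: inj_def)
  have inj2: "inj (\<lambda>n::nat. - int n - 1)" by (simp add: inj_def)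
  have h1: "((\<lambda>k::int. r ^ nat \<bar>k\<bar>) has_sum (1 / (1 - r))) (range int)"
    by (subst has_sum_reindex[OF inj1]) (use g in \<open>simp add: o_def\<close>)
  have h2: "((\<lambda>k::int. r ^ nat \<bar>k\<bar>) has_sum (r * (1 / (1 - r)))) (range (\<lambda>n::nat. - int n - 1))"
  proof (subst has_sum_reindex[OF inj2])
    have "\<And>n::nat. nat \<bar>- int n - 1\<bar> = Suc n" by simp
    then show "(((\<lambda>k::int. r ^ nat \<bar>k\<bar>) \<circ> (\<lambda>n::nat. - int n - 1)) has_sum (r * (1 / (1 - r)))) UNIV"
      using g2 by (simp add: o_def)
  qed
  have un: "range int \<union> range (\<lambda>n::nat. - int n - 1) = (UNIV :: int set)"
  proof -
    have "k \<in> range int \<union> range (\<lambda>n::nat. - int n - 1)" for k :: int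
    proof (cases "k \<ge> 0")
      case True then show ?thesis by (metis UnI1 nonneg_int_cases rangeI)
    next
      case False
      then have "k = - int (nat (- k - 1)) - 1" by simp
      then show ?thesis by (metis UnI2 rangeI)
    qed
    then show ?thesis by auto
  qed
  have dis: "range int \<inter> range (\<lambda>n::nat. - int n - 1) = {}" by auto
  have "((\<lambda>k::int. r ^ nat \<bar>k\<bar>) has_sum (1 / (1 - r) + r * (1 / (1 - r)))) UNIV"
    using has_sum_Un_disjoint[OF h1 h2 dis] un by simp
  moreover have "1 / (1 - r) + r * (1 / (1 - r)) = (1 + r) / (1 - r)"
    using r by (simp add: field_simps)
  ultimately show ?thesis by simp
qed

lemma has_sum_geom_int2:
  fixes r :: real
  assumes r: "0 \<le> r" "r < 1"
  shows "((\<lambda>(k::int, l::int). r ^ nat \<bar>k\<bar> * r ^ nat \<bar>l\<bar>) has_sum (((1 + r) / (1 - r))^2)) UNIV"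
proof -
  define G where "G = (1 + r) / (1 - r)"
  have G0: "G \<ge> 0" using r G_def by simp
  have h: "((\<lambda>k::int. r ^ nat \<bar>k\<bar>) has_sum G) UNIV" using has_sum_geom_int[OF r] G_def by simp
  have inner: "((\<lambda>l. r ^ nat \<bar>k\<bar> * r ^ nat \<bar>l\<bar>) has_sum (r ^ nat \<bar>k\<bar> * G)) UNIV" for k :: int
    using has_sum_cmult_right[OF h] by simp
  have outer: "((\<lambda>k::int. r ^ nat \<bar>k\<bar> * G) has_sum (G * G)) UNIV"
    using has_sum_cmult_left[OF h] by simp
  have summ: "(\<lambda>(k::int, l::int). r ^ nat \<bar>k\<bar> * r ^ nat \<bar>l\<bar>) summable_on Sigma UNIV (\<lambda>_. UNIV)"
  proof -
    have nn: "\<And>k l::int. \<bar>r ^ nat \<bar>k\<bar> * r ^ nat \<bar>l\<bar>\<bar> = r ^ nat \<bar>k\<bar> * r ^ nat \<bar>l\<bar>"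
      using r by simp
    have inf: "(\<Sum>\<^sub>\<infinity>l. norm (case (k, l) of (k, l) \<Rightarrow> r ^ nat \<bar>k\<bar> * r ^ nat \<bar>l\<bar>)) = r ^ nat \<bar>k\<bar> * G" for k :: int
      using inner[of k] by (simp add: nn infsumI)
    have "(\<lambda>x. norm ((\<lambda>(k::int, l::int). r ^ nat \<bar>k\<bar> * r ^ nat \<bar>l\<bar>) x)) summable_on Sigma UNIV (\<lambda>_. UNIV)"
      apply (rule iffD2[OF Infinite_Sum.abs_summable_on_Sigma_iff[where f="\<lambda>(k::int, l::int). r ^ nat \<bar>k\<bar> * r ^ nat \<bar>l\<bar>" and A=UNIV and B="\<lambda>_. UNIV"]])
      apply (intro conjI ballI)
      subgoal for k using inner[of k] by (simp add: nn has_sum_imp_summable)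
      subgoal apply (simp only: inf)
        using outer r G0 by (simp add: abs_mult has_sum_imp_summable)
      done
    then show ?thesis by (rule abs_summable_summable)
  qed
  have "((\<lambda>(k::int, l::int). r ^ nat \<bar>k\<bar> * r ^ nat \<bar>l\<bar>) has_sum (G * G)) (Sigma UNIV (\<lambda>_. UNIV))"
    by (rule has_sum_SigmaI[OF _ outer summ]) (use inner in simp)
  then show ?thesis by (simp add: G_def power2_eq_square)
qed

lemma infsum_as_suminf:
  fixes h :: "int \<times> int \<Rightarrow> real" and M :: "int \<times> int \<Rightarrow> real" and g :: "nat \<Rightarrow> int \<times> int"
  assumes bij: "bij g" and M: "M summable_on UNIV" and hM: "\<And>p. \<bar>h p\<bar> \<le> M p"
  shows "h summable_on UNIV" "summable (\<lambda>n. h (g n))" "infsum h UNIV = (\<Sum>n. h (g n))"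
proof -
  have a: "(\<lambda>p. norm (h p)) summable_on UNIV"
    by (rule Infinite_Sum.abs_summable_on_comparison_test'[OF M]) (use hM in simp)
  then show hs: "h summable_on UNIV" by (rule abs_summable_summable)
  have "(\<lambda>n. h (g n)) summable_on UNIV"
    using summable_on_reindex_bij_betw[OF bij, of h] hs by simp
  then have "((\<lambda>n. h (g n)) has_sum infsum (\<lambda>n. h (g n)) UNIV) UNIV" by simp
  then have s: "(\<lambda>n. h (g n)) sums infsum (\<lambda>n. h (g n)) UNIV" by (rule has_sum_imp_sums)
  then show "summable (\<lambda>n. h (g n))" by (simp add: sums_iff)
  have "infsum h UNIV = infsum (\<lambda>n. h (g n)) UNIV"
    using infsum_reindex_bij_betw[OF bij, of h] by simp
  also have "\<dots> = (\<Sum>n. h (g n))" using s by (simp add: sums_iff)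
  finally show "infsum h UNIV = (\<Sum>n. h (g n))" .
qed

lemma deriv_infsum:
  fixes u u' :: "int \<times> int \<Rightarrow> real \<Rightarrow> real" and M :: "int \<times> int \<Rightarrow> real" and S :: "real set"
  assumes S: "open S" "convex S"
    and der: "\<And>p x. x \<in> S \<Longrightarrow> (u p has_real_derivative u' p x) (at x)"
    and b0: "\<And>p x. x \<in> S \<Longrightarrow> \<bar>u p x\<bar> \<le> M p"
    and b1: "\<And>p x. x \<in> S \<Longrightarrow> \<bar>u' p x\<bar> \<le> M p"
    and M: "M summable_on UNIV"
    and x: "x \<in> S"
  shows "((\<lambda>x. \<Sum>\<^sub>\<infinity>p. u p x) has_real_derivative (\<Sum>\<^sub>\<infinity>p. u' p x)) (at x)"
proof -
  define g :: "nat \<Rightarrow> int \<times> int" where "g = from_nat_into UNIV"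
  have inf: "infinite (UNIV :: (int \<times> int) set)"
    by (simp add: finite_prod infinite_UNIV_int)
  have bij: "bij g" unfolding g_def
    by (rule bij_betw_from_nat_into) (auto simp: inf)
  have M0: "\<And>p. \<bar>M p\<bar> \<le> M p"
  proof -
    fix p have "0 \<le> M p" using b0[OF x, of p] by linarith
    then show "\<bar>M p\<bar> \<le> M p" by simp
  qed
  have Ms: "summable (\<lambda>n. M (g n))"
    by (rule infsum_as_suminf(2)[OF bij M M0])
  have A: "(\<Sum>\<^sub>\<infinity>p. u p y) = (\<Sum>n. u (g n) y)" if y: "y \<in> S" for y
    by (rule infsum_as_suminf(3)[OF bij M b0[OF y]])
  have A': "(\<Sum>\<^sub>\<infinity>p. u' p x) = (\<Sum>n. u' (g n) x)"
    by (rule infsum_as_suminf(3)[OF bij M b1[OF x]])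
  have s0: "summable (\<lambda>n. u (g n) x)"
    by (rule infsum_as_suminf(2)[OF bij M b0[OF x]])
  have uc: "uniformly_convergent_on S (\<lambda>n x. \<Sum>i<n. u' (g i) x)"
    by (rule Weierstrass_m_test'[OF _ Ms]) (use b1 in \<open>simp only: real_norm_def\<close>)
  have "((\<lambda>x. \<Sum>n. u (g n) x) has_real_derivative (\<Sum>n. u' (g n) x)) (at x)"
  proof (rule has_field_derivative_series'(2)[of S "\<lambda>n. u (g n)" "\<lambda>n. u' (g n)" x x])
    show "\<And>n y. y \<in> S \<Longrightarrow> (u (g n) has_field_derivative u' (g n) y) (at y within S)"
      using der by (rule has_field_derivative_at_within)
  qed (use S x uc s0 in \<open>auto simp: interior_open\<close>)
  then have "((\<lambda>x. \<Sum>n. u (g n) x) has_real_derivative (\<Sum>\<^sub>\<infinity>p. u' p x)) (at x)"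
    using A' by simp
  then show ?thesis
    by (rule has_field_derivative_transform_within_open[OF _ S(1) x]) (use A in simp)
qed

definition AA :: "int \<Rightarrow> int \<Rightarrow> real" where "AA k l = of_int (2*k + l + 1)"
definition mm :: "int \<Rightarrow> real" where "mm l = of_int l + 1/2"
definition d1 :: "int \<Rightarrow> int \<Rightarrow> real \<Rightarrow> real" where
  "d1 k l y = - ((AA k l)^2 - mm l) / (4*y^2) + (mm l)^2 - 3 / (64 * y^4)"
definition d2 :: "int \<Rightarrow> int \<Rightarrow> real \<Rightarrow> real" where
  "d2 k l y = ((AA k l)^2 - mm l) / (2*y^3) + 3 / (16 * y^5)"

lemma phi_alt: "phi k l y = (AA k l)^2 / (4*y) + y * (mm l - 1/(8*y^2))^2"
  by (simp add: phi_def AA_def mm_def)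

lemma deriv_phi1:
  assumes y: "y > 0"
  shows "((\<lambda>y. phi k l y) has_real_derivative d1 k l y) (at y)"
  unfolding phi_alt d1_def using y
  apply (intro derivative_eq_intros)
  apply simp_all
  apply (simp add: field_simps)
  apply (simp add: algebra_simps power2_eq_square power3_eq_cube power4_eq_xxxx; algebra?)
  done

lemma deriv_phi2:
  assumes y: "y > 0"
  shows "((\<lambda>y. d1 k l y) has_real_derivative d2 k l y) (at y)"
  unfolding d2_def d1_def using y
  apply (intro derivative_eq_intros)
  apply simp_all
  apply (simp add: field_simps)
  apply (simp add: algebra_simps power2_eq_square power3_eq_cube power4_eq_xxxx; algebra?)
  done

definition RR :: "int \<Rightarrow> int \<Rightarrow> int" where "RR k l = k^2 + k*l + l^2 + k + l"

lemma RR_id: "4 * real_of_int (RR k l) = (AA k l)^2 + 3*(mm l)^2 - mm l - 5/4"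
  by (simp add: RR_def AA_def mm_def power2_eq_square algebra_simps)

lemma RR_id2: "4 * real_of_int (RR k l) = (AA k l)^2 - of_int l - 1 + 3 * (of_int l * (of_int l + 1))"
  by (simp add: RR_def AA_def power2_eq_square algebra_simps)

lemma RR_sq: "2 * RR k l + 1 = (k+l+1)^2 + k^2 + l^2"
  by (simp add: RR_def power2_eq_square algebra_simps)

lemma RR_nonneg: "RR k l \<ge> 0"
proof -
  have "2 * RR k l + 1 \<ge> 0" unfolding RR_sq by simp
  then show ?thesis by arith
qed

lemma RR_X: "k^2 + l^2 \<le> 2 * RR k l + 1"
  unfolding RR_sq by simp

lemma sq_le1: "(k::int)^2 \<le> 1 \<Longrightarrow> k = -1 \<or> k = 0 \<or> k = 1"
proof -
  assume h: "k^2 \<le> 1"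
  have "\<bar>k\<bar> \<le> 1"
  proof (rule ccontr)
    assume "\<not> \<bar>k\<bar> \<le> 1"
    then have "2 \<le> \<bar>k\<bar>" by simp
    then have "2 * 2 \<le> \<bar>k\<bar> * \<bar>k\<bar>" by (intro mult_mono) auto
    then show False using h by (simp add: power2_eq_square)
  qed
  then show ?thesis by arith
qed

lemma RR_pos:
  assumes "(k, l) \<notin> {(0,0), (-1,0), (0,-1)}"
  shows "RR k l \<ge> 1"
proof (rule ccontr)
  assume "\<not> RR k l \<ge> 1"
  then have "RR k l = 0" using RR_nonneg[of k l] by arith
  then have e: "(k+l+1)^2 + k^2 + l^2 = 1" using RR_sq[of k l] by simp
  have "k^2 \<le> 1" "l^2 \<le> 1" using e by (smt (verit) zero_le_power2)+
  then have "k = -1 \<or> k = 0 \<or> k = 1" "l = -1 \<or> l = 0 \<or> l = 1" using sq_le1 by auto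
  then show False using assms e by auto
qed

lemma l_prod_nonneg: "0 \<le> (of_int l :: real) * (of_int l + 1)"
proof -
  have "0 \<le> l * (l + 1)"
  proof (cases "l \<ge> 0")
    case True then show ?thesis by simp
  next
    case False then have "l + 1 \<le> 0" by simp
    then show ?thesis using False by (simp add: mult_nonpos_nonpos)
  qed
  then have "0 \<le> real_of_int (l * (l + 1))" by linarith
  then show ?thesis by simp
qed

lemma phi_split:
  assumes y: "y > 0"
  shows "phi k l y = phi 0 0 y + (((AA k l)^2 - of_int l - 1) / (4*y) + of_int l * (of_int l + 1) * y)"
  using y unfolding phi_alt by (simp add: AA_def mm_def field_simps power2_eq_square; simp add: algebra_simps)

lemma phi00_nonneg: "y > 0 \<Longrightarrow> phi 0 0 y \<ge> 0"
  unfolding phi_def by simp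

lemma Delta_lb1:
  assumes y: "y > 0" and y3: "4*y^2 \<ge> 3"
  shows "((AA k l)^2 - of_int l - 1) / (4*y) + of_int l * (of_int l + 1) * y \<ge> real_of_int (RR k l) / y"
proof -
  define L where "L = (of_int l :: real) * (of_int l + 1)"
  have L0: "L \<ge> 0" unfolding L_def by (rule l_prod_nonneg)
  have r: "real_of_int (RR k l) = ((AA k l)^2 - of_int l - 1 + 3*L)/4"
    using RR_id2[of k l] unfolding L_def by simp
  have eq: "((AA k l)^2 - of_int l - 1) / (4*y) + L * y - real_of_int (RR k l) / y = ((4*y^2 - 3) * L) / (4*y)"
    using y unfolding r by (simp add: field_simps power2_eq_square; simp add: algebra_simps)
  have "((4*y^2 - 3) * L) / (4*y) \<ge> 0" using y y3 L0 by simp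
  then show ?thesis using eq unfolding L_def by linarith
qed

lemma Delta_lb2:
  assumes y1: "4/5 \<le> y" and y2: "y \<le> 11/10"
  shows "((AA k l)^2 - of_int l - 1) / (4*y) + of_int l * (of_int l + 1) * y \<ge> real_of_int (RR k l) / 2 - 1/10"
proof -
  define L where "L = (of_int l :: real) * (of_int l + 1)"
  define R where "R = real_of_int (RR k l)"
  define D where "D = ((AA k l)^2 - of_int l - 1) / (4*y) + L * y"
  have y: "y > 0" using y1 by simp
  have L0: "L \<ge> 0" unfolding L_def by (rule l_prod_nonneg)
  have R0: "R \<ge> 0" unfolding R_def using RR_nonneg[of k l] by simp
  have e1: "4*y*D = (AA k l)^2 - of_int l - 1 + 4*y^2*L"
    using y unfolding D_def by (simp add: field_simps power2_eq_square)
  have yy: "y^2 \<ge> 16/25"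
  proof -
    have "(4/5)^2 \<le> y^2" using y1 by (intro power_mono) auto
    then show ?thesis by (simp add: power2_eq_square)
  qed
  have e2: "(64/25) * L \<le> (4*y^2) * L" using yy L0 by (intro mult_right_mono) auto
  have e3: "4 * R = (AA k l)^2 - of_int l - 1 + 3 * L" unfolding R_def L_def by (rule RR_id2)
  have e4: "0 \<le> (of_int l :: real)^2 - of_int l / 4 + 1/64"
  proof -
    have "0 \<le> (of_int l - 1/8 :: real)^2" by simp
    then show ?thesis by (simp add: power2_eq_square algebra_simps)
  qed
  have e5: "L = (of_int l)^2 + of_int l" unfolding L_def by (simp add: power2_eq_square algebra_simps)
  have A0: "(AA k l)^2 \<ge> 0" by simp
  have q: "4*y*D \<ge> (16/5) * R - 21/100"
    using e1 e2 e3 e4 e5 A0 by linarith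
  have c: "y * (2*R - 2/5) \<le> (16/5) * R - 21/100"
  proof (cases "2*R - 2/5 \<ge> 0")
    case True
    then have a: "y * (2*R - 2/5) \<le> (11/10) * (2*R - 2/5)" using y2 by (intro mult_right_mono) auto
    have b: "(11/10) * (2*R - 2/5) \<le> (16/5) * R - 21/100" using R0 by (simp add: algebra_simps)
    show ?thesis using order_trans[OF a b] .
  next
    case False
    then have a: "y * (2*R - 2/5) \<le> (4/5) * (2*R - 2/5)" using y1 by (intro mult_right_mono_neg) auto
    have b: "(4/5) * (2*R - 2/5) \<le> (16/5) * R - 21/100" using R0 by (simp add: algebra_simps)
    show ?thesis using order_trans[OF a b] .
  qed
  have "4*y*D \<ge> 4*y*(R/2 - 1/10)" using q c by (simp add: algebra_simps)
  then have "D \<ge> R/2 - 1/10" using y by (simp add: mult_le_cancel_left_pos)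
  then show ?thesis unfolding D_def L_def R_def .
qed

lemma d_bounds:
  assumes y1: "4/5 \<le> y" and y2: "y \<le> 11/10"
  shows "\<bar>d1 k l y\<bar> \<le> (3 + 3*real_of_int (RR k l))" "\<bar>d2 k l y\<bar> \<le> (5 + 5*real_of_int (RR k l))"
proof -
  define w where "w = 1/y"
  define a where "a = (AA k l)^2"
  define m where "m = mm l"
  define R where "R = real_of_int (RR k l)"
  define q where "q = w^2"
  define c where "c = w^3"
  define z where "z = w^5"
  have y: "y > 0" using y1 by simp
  have w0: "0 < w" using y by (simp add: w_def)
  have w1: "w \<le> 5/4" using y1 y unfolding w_def by (simp add: field_simps)
  have q0: "0 \<le> q" unfolding q_def by simp
  have q1: "q \<le> 25/16"
  proof -
    have "w^2 \<le> (5/4)^2" using w0 w1 by (intro power_mono) auto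
    then show ?thesis unfolding q_def by (simp add: power2_eq_square)
  qed
  have qq1: "q^2 \<le> 625/256"
  proof -
    have "q^2 \<le> (25/16)^2" using q0 q1 by (intro power_mono) auto
    then show ?thesis by (simp add: power2_eq_square)
  qed
  have qq0: "0 \<le> q^2" by simp
  have c0: "0 \<le> c" unfolding c_def using w0 by simp
  have c1: "c \<le> 125/64"
  proof -
    have "w^3 \<le> (5/4)^3" using w0 w1 by (intro power_mono) auto
    then show ?thesis unfolding c_def by (simp add: power3_eq_cube)
  qed
  have v0: "0 \<le> z" unfolding z_def using w0 by simp
  have v1: "z \<le> 3125/1024"
  proof -
    have "w^5 \<le> (5/4)^5" using w0 w1 by (intro power_mono) auto
    then show ?thesis unfolding z_def by (simp add: power_divide)
  qed
  have d1e: "d1 k l y = - (a*q)/4 + (m*q)/4 + m^2 - 3*q^2/64"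
    unfolding d1_def a_def m_def q_def w_def using y by (simp add: field_simps power2_eq_square power4_eq_xxxx)
  have d2e: "d2 k l y = (a*c)/2 - (m*c)/2 + 3*z/16"
    unfolding d2_def a_def m_def c_def z_def w_def using y by (simp add: field_simps power2_eq_square power3_eq_cube)
  have a0: "0 \<le> a" unfolding a_def by simp
  have aq0: "0 \<le> a*q" using a0 q0 by simp
  have aq1: "a*q \<le> a*(25/16)" by (rule mult_left_mono[OF q1 a0])
  have mq: "\<bar>m*q\<bar> \<le> \<bar>m\<bar>*(25/16)"
    using mult_left_mono[OF q1 abs_ge_zero[of m]] q0 by (simp add: abs_mult)
  have ac0: "0 \<le> a*c" using a0 c0 by simp
  have ac1: "a*c \<le> a*(125/64)" by (rule mult_left_mono[OF c1 a0])
  have mc: "\<bar>m*c\<bar> \<le> \<bar>m\<bar>*(125/64)"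
    using mult_left_mono[OF c1 abs_ge_zero[of m]] c0 by (simp add: abs_mult)
  have rid: "4*R = a + 3*m^2 - m - 5/4" unfolding R_def a_def m_def by (rule RR_id)
  have msq: "m^2 \<ge> \<bar>m\<bar> - 1/4"
  proof -
    have "0 \<le> (\<bar>m\<bar> - 1/2)^2" by simp
    then show ?thesis by (simp add: power2_eq_square algebra_simps)
  qed
  have m1: "m \<le> \<bar>m\<bar>" "-m \<le> \<bar>m\<bar>" "0 \<le> \<bar>m\<bar>" by auto
  have mq1: "m*q \<le> \<bar>m\<bar>*(25/16)" "-(m*q) \<le> \<bar>m\<bar>*(25/16)" using mq by linarith+
  have mc1: "m*c \<le> \<bar>m\<bar>*(125/64)" "-(m*c) \<le> \<bar>m\<bar>*(125/64)" using mc by linarith+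
  have u1: "d1 k l y \<le> (3 + 3*R)" unfolding d1e
    using aq0 aq1 mq1 qq0 qq1 rid msq m1 a0 by linarith
  have u2: "- d1 k l y \<le> (3 + 3*R)" unfolding d1e
    using aq0 aq1 mq1 qq0 qq1 rid msq m1 a0 by linarith
  have u3: "d2 k l y \<le> (5 + 5*R)" unfolding d2e
    using ac0 ac1 mc1 v0 v1 rid msq m1 a0 by linarith
  have u4: "- d2 k l y \<le> (5 + 5*R)" unfolding d2e
    using ac0 ac1 mc1 v0 v1 rid msq m1 a0 by linarith
  show "\<bar>d1 k l y\<bar> \<le> (3 + 3*real_of_int (RR k l))" using u1 u2 unfolding R_def by linarith
  show "\<bar>d2 k l y\<bar> \<le> (5 + 5*real_of_int (RR k l))" using u3 u4 unfolding R_def by linarith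
qed

definition U :: "real \<Rightarrow> int \<times> int \<Rightarrow> real \<Rightarrow> real" where
  "U t p y = (case p of (k, l) \<Rightarrow> exp (- t * phi k l y))"
definition U1 :: "real \<Rightarrow> int \<times> int \<Rightarrow> real \<Rightarrow> real" where
  "U1 t p y = (case p of (k, l) \<Rightarrow> - t * d1 k l y * exp (- t * phi k l y))"
definition U2 :: "real \<Rightarrow> int \<times> int \<Rightarrow> real \<Rightarrow> real" where
  "U2 t p y = (case p of (k, l) \<Rightarrow> (t^2 * (d1 k l y)^2 - t * d2 k l y) * exp (- t * phi k l y))"
definition KK :: "real \<Rightarrow> real" where
  "KK t = (81*t^2 + 24*t + 1) * exp (7*t/20) * (1 + 16/t)^2"
definition MM :: "real \<Rightarrow> int \<times> int \<Rightarrow> real" where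
  "MM t p = (case p of (k, l) \<Rightarrow> KK t * (exp (-t/8) ^ nat \<bar>k\<bar> * exp (-t/8) ^ nat \<bar>l\<bar>))"

lemma U_deriv:
  assumes y: "y > 0"
  shows "(U t p has_real_derivative U1 t p y) (at y)"
proof -
  obtain k l where p: "p = (k, l)" by (cases p)
  have "((\<lambda>y. exp (- t * phi k l y)) has_real_derivative exp (- t * phi k l y) * (- t * d1 k l y)) (at y)"
    by (intro DERIV_fun_exp DERIV_cmult deriv_phi1 y)
  then show ?thesis unfolding U_def U1_def p by (simp add: algebra_simps)
qed

lemma U1_deriv:
  assumes y: "y > 0"
  shows "(U1 t p has_real_derivative U2 t p y) (at y)"
proof -
  obtain k l where p: "p = (k, l)" by (cases p)
  have e: "((\<lambda>y. exp (- t * phi k l y)) has_real_derivative exp (- t * phi k l y) * (- t * d1 k l y)) (at y)"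
    by (intro DERIV_fun_exp DERIV_cmult deriv_phi1 y)
  have "((\<lambda>y. (- t * d1 k l y) * exp (- t * phi k l y)) has_real_derivative
      (- t * d2 k l y) * exp (- t * phi k l y) + (exp (- t * phi k l y) * (- t * d1 k l y)) * (- t * d1 k l y)) (at y)"
    by (rule DERIV_mult[OF DERIV_cmult[OF deriv_phi2[OF y]] e])
  then show ?thesis unfolding U1_def U2_def p by (simp add: algebra_simps power2_eq_square)
qed

lemma int_abs_le_sq: "\<bar>k::int\<bar> \<le> k^2"
proof (cases "k = 0")
  case True then show ?thesis by simp
next
  case False
  then have "1 \<le> \<bar>k\<bar>" by simp
  then have "\<bar>k\<bar> * 1 \<le> \<bar>k\<bar> * \<bar>k\<bar>" by (intro mult_left_mono) auto
  then show ?thesis by (simp add: power2_eq_square)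
qed

lemma RR_le_X: "real_of_int (RR k l) \<le> 5/2 * (of_int k^2 + of_int l^2)"
proof -
  have a: "2 * (k * l) \<le> k^2 + l^2"
  proof -
    have "0 \<le> (k - l)^2" by simp
    then show ?thesis by (simp add: power2_eq_square algebra_simps)
  qed
  have b: "k \<le> k^2" "l \<le> l^2" using int_abs_le_sq[of k] int_abs_le_sq[of l] by linarith+
  have "2 * RR k l = 2*k^2 + 2*(k*l) + 2*l^2 + 2*k + 2*l" by (simp add: RR_def algebra_simps)
  then have "2 * RR k l \<le> 5 * k^2 + 5 * l^2" using a b by linarith
  then have "real_of_int (2 * RR k l) \<le> real_of_int (5 * k^2 + 5 * l^2)" by (simp only: of_int_le_iff)
  then show ?thesis by simp
qed

lemma exp_sq_le: "(t::real) \<ge> 0 \<Longrightarrow> exp (- t * (of_int k)^2) \<le> exp (-t) ^ nat \<bar>k\<bar>"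
proof -
  assume t: "t \<ge> 0"
  have "real_of_int \<bar>k\<bar> \<le> real_of_int (k^2)" by (simp only: of_int_le_iff int_abs_le_sq)
  then have "t * real_of_int \<bar>k\<bar> \<le> t * (of_int k)^2" using t by (simp add: mult_left_mono)
  then have "exp (- t * (of_int k)^2) \<le> exp (- (t * real_of_int \<bar>k\<bar>))" by simp
  also have "exp (- (t * real_of_int \<bar>k\<bar>)) = exp (-t) ^ nat \<bar>k\<bar>"
  proof -
    have "exp (-t) ^ nat \<bar>k\<bar> = exp (real (nat \<bar>k\<bar>) * (-t))" by (rule exp_of_nat_mult[symmetric])
    then show ?thesis by simp
  qed
  finally show ?thesis .
qed

lemma U_bounds:
  fixes t :: real
  assumes t: "t > 0" and y1: "4/5 \<le> y" and y2: "y \<le> 11/10"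
  shows "\<bar>U t p y\<bar> \<le> MM t p" "\<bar>U1 t p y\<bar> \<le> MM t p" "\<bar>U2 t p y\<bar> \<le> MM t p"
proof -
  obtain k l where p: "p = (k, l)" by (cases p)
  have y: "y > 0" using y1 by simp
  define X where "X = ((of_int k)^2 + (of_int l)^2 :: real)"
  define R where "R = real_of_int (RR k l)"
  define e where "e = exp (- t * phi k l y)"
  define Y where "Y = 1 + X"
  define C where "C = 81*t^2 + 24*t + 1"
  have X0: "0 \<le> X" unfolding X_def by simp
  have R0: "0 \<le> R" unfolding R_def using RR_nonneg[of k l] by simp
  have RX: "R \<le> 5/2 * X" unfolding R_def X_def by (rule RR_le_X)
  have XR: "X \<le> 2 * R + 1"
  proof -
    have "real_of_int (k^2 + l^2) \<le> real_of_int (2 * RR k l + 1)" by (simp only: of_int_le_iff RR_X)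
    then show ?thesis unfolding X_def R_def by simp
  qed
  have Y1: "1 \<le> Y" unfolding Y_def using X0 by simp
  have e0: "0 < e" unfolding e_def by simp
  have phib: "phi k l y \<ge> X/4 - 7/20"
    using phi_split[OF y, of k l] phi00_nonneg[OF y] Delta_lb2[OF y1 y2, of k l] XR unfolding R_def by linarith
  have eb: "e \<le> exp (7*t/20) * exp (- t / 8 * X) * exp (- t / 8 * X)"
  proof -
    have "t * (X/4 - 7/20) \<le> t * phi k l y" using phib t by (simp add: mult_left_mono)
    then have "- t * phi k l y \<le> 7*t/20 + (- t / 8 * X) + (- t / 8 * X)" by (simp add: algebra_simps)
    then have "e \<le> exp (7*t/20 + (- t / 8 * X) + (- t / 8 * X))" unfolding e_def by (simp only: exp_le_cancel_iff)
    then show ?thesis by (simp only: exp_add)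
  qed
  have hd1: "\<bar>d1 k l y\<bar> \<le> 9 * Y"
  proof -
    have "\<bar>d1 k l y\<bar> \<le> 9 + 9 * X" using d_bounds(1)[OF y1 y2, of k l] RX X0 unfolding R_def by linarith
    then show ?thesis unfolding Y_def by (simp add: algebra_simps)
  qed
  have hd2: "\<bar>d2 k l y\<bar> \<le> 15 * Y"
  proof -
    have "\<bar>d2 k l y\<bar> \<le> 15 + 15 * X" using d_bounds(2)[OF y1 y2, of k l] RX X0 unfolding R_def by linarith
    then show ?thesis unfolding Y_def by (simp add: algebra_simps)
  qed
  have YY: "Y \<le> Y^2" using Y1 by (simp add: power2_eq_square)
  have Y21: "1 \<le> Y^2" using Y1 YY by linarith
  have C1: "1 \<le> C" unfolding C_def using t by simp
  have CY: "1 \<le> C * Y^2" using mult_mono[OF C1 Y21] C1 by simp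
  have b0: "\<bar>U t p y\<bar> \<le> C * Y^2 * e"
  proof -
    have "\<bar>U t p y\<bar> = 1 * e" unfolding U_def p e_def by simp
    also have "\<dots> \<le> C * Y^2 * e" using CY e0 by (intro mult_right_mono) auto
    finally show ?thesis .
  qed
  have b1: "\<bar>U1 t p y\<bar> \<le> C * Y^2 * e"
  proof -
    have "\<bar>U1 t p y\<bar> = (t * \<bar>d1 k l y\<bar>) * e" unfolding U1_def p e_def using t by (simp add: abs_mult)
    also have "\<dots> \<le> (t * (9 * Y)) * e" using hd1 t e0 by (intro mult_right_mono mult_left_mono) auto
    also have "\<dots> \<le> (9 * t * Y^2) * e" using YY t e0 by (intro mult_right_mono) auto
    also have "\<dots> \<le> C * Y^2 * e"
    proof -
      have "9 * t \<le> C" unfolding C_def using t by (simp add: power2_eq_square)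
      then have "9 * t * Y^2 \<le> C * Y^2" by (intro mult_right_mono) auto
      then show ?thesis by (rule mult_right_mono) (use e0 in auto)
    qed
    finally show ?thesis .
  qed
  have b2: "\<bar>U2 t p y\<bar> \<le> C * Y^2 * e"
  proof -
    have sq: "(d1 k l y)^2 \<le> (9 * Y)^2"
    proof -
      have "\<bar>d1 k l y\<bar>^2 \<le> (9 * Y)^2" using hd1 by (intro power_mono) auto
      then show ?thesis by simp
    qed
    have "\<bar>U2 t p y\<bar> = \<bar>t^2 * (d1 k l y)^2 - t * d2 k l y\<bar> * e" unfolding U2_def p e_def by (simp add: abs_mult)
    also have "\<dots> \<le> (t^2 * (d1 k l y)^2 + t * \<bar>d2 k l y\<bar>) * e"
    proof -
      have "\<bar>t^2 * (d1 k l y)^2 - t * d2 k l y\<bar> \<le> \<bar>t^2 * (d1 k l y)^2\<bar> + \<bar>t * d2 k l y\<bar>" by (rule abs_triangle_ineq4)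
      also have "\<dots> = t^2 * (d1 k l y)^2 + t * \<bar>d2 k l y\<bar>" using t by (simp add: abs_mult)
      finally show ?thesis by (rule mult_right_mono) (use e0 in auto)
    qed
    also have "\<dots> \<le> (t^2 * (9*Y)^2 + t * (15 * Y)) * e"
    proof -
      have "t^2 * (d1 k l y)^2 \<le> t^2 * (9*Y)^2" using sq by (intro mult_left_mono) auto
      moreover have "t * \<bar>d2 k l y\<bar> \<le> t * (15 * Y)" using hd2 t by (intro mult_left_mono) auto
      ultimately show ?thesis using e0 by (intro mult_right_mono) auto
    qed
    also have "\<dots> \<le> C * Y^2 * e"
    proof -
      have "t * (15 * Y) \<le> t * (15 * Y^2)" using YY t by (intro mult_left_mono) auto
      then have "t^2 * (9*Y)^2 + t * (15 * Y) \<le> (81 * t^2 + 15 * t) * Y^2"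
        by (simp add: power_mult_distrib algebra_simps)
      also have "\<dots> \<le> C * Y^2" unfolding C_def using t by (intro mult_right_mono) auto
      finally show ?thesis by (rule mult_right_mono) (use e0 in auto)
    qed
    finally show ?thesis .
  qed
  have Yb: "Y \<le> (1 + 16/t) * exp (t / 16 * X)"
  proof -
    have "Y \<le> (1 + 16/t) * (1 + t / 16 * X)"
      unfolding Y_def using t X0 by (simp add: field_simps)
    also have "\<dots> \<le> (1 + 16/t) * exp (t / 16 * X)"
      using t by (intro mult_left_mono) (auto simp: exp_ge_add_one_self)
    finally show ?thesis .
  qed
  have Y2b: "Y^2 \<le> (1 + 16/t)^2 * exp (t / 8 * X)"
  proof -
    have "Y^2 \<le> ((1 + 16/t) * exp (t / 16 * X))^2" using Yb Y1 by (intro power_mono) auto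
    also have "\<dots> = (1 + 16/t)^2 * exp (t / 8 * X)"
      by (simp add: power_mult_distrib flip: exp_of_nat_mult)
    finally show ?thesis .
  qed
  have main: "C * Y^2 * e \<le> KK t * exp (- t / 8 * X)"
  proof -
    have "C * Y^2 * e \<le> C * ((1 + 16/t)^2 * exp (t / 8 * X)) * (exp (7*t/20) * exp (- t / 8 * X) * exp (- t / 8 * X))"
      using Y2b eb C1 e0 by (intro mult_mono) auto
    also have "\<dots> = KK t * exp (- t / 8 * X)"
    proof -
      define a where "a = exp (t / 8 * X)"
      define b where "b = exp (- t / 8 * X)"
      define c7 where "c7 = exp (7*t/20)"
      define s where "s = (1 + 16/t)^2"
      have ab: "a * b = 1" unfolding a_def b_def by (simp flip: exp_add)
      have "C * (s * a) * (c7 * b * b) = (C * c7 * s) * b * (a * b)" by (simp only: mult_ac)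
      also have "\<dots> = (C * c7 * s) * b" using ab by simp
      finally show ?thesis unfolding a_def b_def c7_def s_def KK_def C_def by (simp only: mult_ac)
    qed
    finally show ?thesis .
  qed
  have geo: "exp (- t / 8 * X) \<le> exp (-t/8) ^ nat \<bar>k\<bar> * exp (-t/8) ^ nat \<bar>l\<bar>"
  proof -
    have "exp (- t / 8 * X) = exp (- (t/8) * (of_int k)^2) * exp (- (t/8) * (of_int l)^2)"
      unfolding X_def by (simp add: algebra_simps flip: exp_add)
    also have "\<dots> \<le> exp (-(t/8)) ^ nat \<bar>k\<bar> * exp (-(t/8)) ^ nat \<bar>l\<bar>"
      using t by (intro mult_mono exp_sq_le) auto
    finally show ?thesis by simp
  qed
  have KK0: "0 \<le> KK t" unfolding KK_def using t by simp
  have fin: "C * Y^2 * e \<le> MM t p"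
    using main mult_left_mono[OF geo KK0] unfolding MM_def p by simp
  show "\<bar>U t p y\<bar> \<le> MM t p" using b0 fin by linarith
  show "\<bar>U1 t p y\<bar> \<le> MM t p" using b1 fin by linarith
  show "\<bar>U2 t p y\<bar> \<le> MM t p" using b2 fin by linarith
qed

lemma MM_summable: "t > 0 \<Longrightarrow> MM t summable_on UNIV"
proof -
  assume t: "t > 0"
  have r: "0 \<le> exp (-t/8)" "exp (-t/8) < 1" using t by auto
  have "(\<lambda>(k::int, l::int). exp (-t/8) ^ nat \<bar>k\<bar> * exp (-t/8) ^ nat \<bar>l\<bar>) summable_on UNIV"
    using has_sum_geom_int2[OF r] by (rule has_sum_imp_summable)
  then have "(\<lambda>p. KK t * (case p of (k::int, l::int) \<Rightarrow> exp (-t/8) ^ nat \<bar>k\<bar> * exp (-t/8) ^ nat \<bar>l\<bar>)) summable_on UNIV"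
    by (rule summable_on_cmult_right)
  then show ?thesis unfolding MM_def by (simp add: case_prod_unfold)
qed

lemma sqrt3_bounds: "17320/10000 \<le> sqrt 3" "sqrt 3 \<le> 17321/10000"
proof -
  have "sqrt ((17320/10000)^2) \<le> sqrt 3" by (subst real_sqrt_le_iff) (simp add: power2_eq_square)
  then show "17320/10000 \<le> sqrt 3" by simp
  have "sqrt 3 \<le> sqrt ((17321/10000)^2)" by (subst real_sqrt_le_iff) (simp add: power2_eq_square)
  then show "sqrt 3 \<le> 17321/10000" by simp
qed

lemma others_bound:
  assumes t: "40/3 \<le> t" and ya: "sqrt 3/2 \<le> y" and yb: "y \<le> 1003/1000"
    and p: "p \<notin> {(0,0),(-1,0),(0,-1)}"
  shows "U2 t p y \<le> 10*t^2*exp(-t*phi 0 0 y)*exp(-15*t/32) *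
     (case p of (k,l) \<Rightarrow> exp(-(3*t/32))^nat \<bar>k\<bar> * exp(-(3*t/32))^nat \<bar>l\<bar>)"
proof -
  obtain k l where pk: "p = (k, l)" by (cases p)
  have kl: "(k, l) \<notin> {(0,0),(-1,0),(0,-1)}" using p pk by simp
  define R where "R = real_of_int (RR k l)"
  define X where "X = ((of_int k)^2 + (of_int l)^2 :: real)"
  define E0 where "E0 = exp (-t * phi 0 0 y)"
  define Dl where "Dl = ((AA k l)^2 - of_int l - 1) / (4*y) + of_int l * (of_int l + 1) * y"
  have t0: "0 < t" using t by simp
  have y0: "0.8 < y" using ya sqrt3_bounds by linarith
  have y: "0 < y" using y0 by simp
  have y1: "4/5 \<le> y" using y0 by simp
  have y2: "y \<le> 11/10" using yb by simp
  have y3: "3 \<le> 4*y^2"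
  proof -
    have "(sqrt 3/2)^2 \<le> y^2" using ya by (intro power_mono) auto
    then show ?thesis by (simp add: power_divide)
  qed
  have R1: "1 \<le> R" unfolding R_def using RR_pos[OF kl] by simp
  have XR: "X \<le> 2 * R + 1"
  proof -
    have "real_of_int (k^2 + l^2) \<le> real_of_int (2 * RR k l + 1)" by (simp only: of_int_le_iff RR_X)
    then show ?thesis unfolding X_def R_def by simp
  qed
  have DlR: "R / y \<le> Dl" unfolding Dl_def R_def by (rule Delta_lb1[OF y y3])
  have Ry: "9/10 * R \<le> R / y"
  proof -
    have "R * y \<le> R * (10/9)" using R1 yb by (intro mult_left_mono) auto
    then have "9/10 * R * y \<le> R" by simp
    then show ?thesis using y by (simp add: le_divide_eq)
  qed
  have Dl9: "9/10 * R \<le> Dl" using DlR Ry by linarith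
  have e_split: "exp (-t * phi k l y) = E0 * exp (- (t * Dl))"
    unfolding E0_def using phi_split[OF y, of k l] unfolding Dl_def[symmetric]
    by (simp add: algebra_simps flip: exp_add)
  have eDl: "exp (- (t * Dl)) \<le> exp (- (9/10 * (t * R)))"
  proof -
    have "t * (9/10 * R) \<le> t * Dl" using Dl9 t0 by (intro mult_left_mono) auto
    then show ?thesis by simp
  qed
  have hd1: "\<bar>d1 k l y\<bar> \<le> 3 + 3 * R" unfolding R_def by (rule d_bounds(1)[OF y1 y2])
  have hd2: "\<bar>d2 k l y\<bar> \<le> 5 + 5 * R" unfolding R_def by (rule d_bounds(2)[OF y1 y2])
  have q: "t^2 * (d1 k l y)^2 - t * d2 k l y \<le> 10 * t^2 * (1 + R)^2"
  proof -
    have a: "(d1 k l y)^2 \<le> (3 + 3*R)^2"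
    proof -
      have "\<bar>d1 k l y\<bar>^2 \<le> (3 + 3*R)^2" using hd1 by (intro power_mono) auto
      then show ?thesis by simp
    qed
    have a2: "t^2 * (d1 k l y)^2 \<le> t^2 * (3 + 3*R)^2" using a by (intro mult_left_mono) auto
    have a3: "t^2 * (3 + 3*R)^2 = 9 * (t^2 * (1+R)^2)" by (simp add: power2_eq_square algebra_simps)
    have b: "- (t * d2 k l y) \<le> t * (5 + 5*R)"
    proof -
      have "- d2 k l y \<le> 5 + 5*R" using hd2 by linarith
      then have "t * (- d2 k l y) \<le> t * (5 + 5*R)" using t0 by (intro mult_left_mono) auto
      then show ?thesis by simp
    qed
    have b2: "t * (5 + 5*R) \<le> t^2 * (1+R)^2"
    proof -
      have "5 * (1 + R) \<le> t * (1 + R)" using t R1 by (intro mult_right_mono) auto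
      also have "\<dots> \<le> t * (1+R)^2" using t0 R1 by (intro mult_left_mono) (auto simp: power2_eq_square)
      finally have "5 * (1 + R) \<le> t * (1+R)^2" .
      then have "t * (5 * (1 + R)) \<le> t * (t * (1+R)^2)" using t0 by (intro mult_left_mono) auto
      then show ?thesis by (simp add: power2_eq_square algebra_simps)
    qed
    have c: "10 * t^2 * (1 + R)^2 = 10 * (t^2 * (1+R)^2)" by simp
    show ?thesis using a2 a3 b b2 c by linarith
  qed
  have Re: "(1 + R)^2 \<le> exp (2 * R)"
  proof -
    have "(1 + R)^2 \<le> (exp R)^2" using R1 by (intro power_mono) (auto simp: exp_ge_add_one_self)
    also have "\<dots> = exp (2 * R)" by (simp flip: exp_of_nat_mult)
    finally show ?thesis .
  qed
  have expo: "2 * R + - (9/10 * (t * R)) \<le> - (3*t/32) * (of_int k)^2 + - (3*t/32) * (of_int l)^2 + -(15*t/32)"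
  proof -
    have tR: "40/3 * R \<le> t * R" using t R1 by (intro mult_right_mono) auto
    have tX: "t * X + 5 * t \<le> 8 * (t * R)"
    proof -
      have "t * (X + 5) \<le> t * (8 * R)" using XR R1 t0 by (intro mult_left_mono) auto
      then show ?thesis by (simp add: algebra_simps)
    qed
    have "- (3*t/32) * (of_int k)^2 + - (3*t/32) * (of_int l)^2 + -(15*t/32) = - 3/32 * (t * X) - 15/32 * t"
      unfolding X_def by (simp add: algebra_simps)
    then show ?thesis using tR tX by linarith
  qed
  have rho: "exp (- (3*t/32) * (of_int k)^2) * exp (- (3*t/32) * (of_int l)^2) \<le>
      exp(-(3*t/32))^nat \<bar>k\<bar> * exp(-(3*t/32))^nat \<bar>l\<bar>"
    using t0 by (intro mult_mono exp_sq_le) auto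
  have "U2 t p y = (t^2 * (d1 k l y)^2 - t * d2 k l y) * exp (-t * phi k l y)"
    unfolding U2_def pk by simp
  also have "\<dots> \<le> (10 * t^2 * (1 + R)^2) * exp (-t * phi k l y)"
    using q by (rule mult_right_mono) simp
  also have "\<dots> \<le> (10 * t^2 * exp (2 * R)) * (E0 * exp (- (9/10 * (t * R))))"
    unfolding e_split using Re eDl t0 by (intro mult_mono) (auto simp: E0_def)
  also have "\<dots> = 10 * t^2 * E0 * exp (2 * R + - (9/10 * (t * R)))"
    by (simp only: exp_add) (simp add: algebra_simps)
  also have "\<dots> \<le> 10 * t^2 * E0 * exp (- (3*t/32) * (of_int k)^2 + - (3*t/32) * (of_int l)^2 + -(15*t/32))"
    using expo by (intro mult_left_mono) (auto simp: E0_def)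
  also have "\<dots> = 10 * t^2 * E0 * exp (-(15*t/32)) * (exp (- (3*t/32) * (of_int k)^2) * exp (- (3*t/32) * (of_int l)^2))"
    by (simp only: exp_add) (simp add: algebra_simps)
  also have "\<dots> \<le> 10 * t^2 * E0 * exp (-(15*t/32)) * (exp(-(3*t/32))^nat \<bar>k\<bar> * exp(-(3*t/32))^nat \<bar>l\<bar>)"
    using rho by (intro mult_left_mono) (auto simp: E0_def)
  finally show ?thesis unfolding pk E0_def by simp
qed

lemma main_terms:
  assumes y: "y > 0"
  shows "U2 t (-1, 0) y = U2 t (0, 0) y" "U2 t (0, -1) y = U2 t (0, 0) y"
proof -
  have p1: "phi (-1) 0 y = phi 0 0 y" by (simp add: phi_def)
  have p2: "phi 0 (-1) y = phi 0 0 y"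
    using y by (simp add: phi_def field_simps power2_eq_square; simp add: algebra_simps)
  show "U2 t (-1, 0) y = U2 t (0, 0) y" unfolding U2_def using p1 by (simp add: d1_def d2_def AA_def mm_def)
  show "U2 t (0, -1) y = U2 t (0, 0) y" unfolding U2_def using p2 by (simp add: d1_def d2_def AA_def mm_def)
qed

lemma exp_quad_ge: "0 \<le> (x::real) \<Longrightarrow> 1 + x + x^2/2 \<le> exp x"
  by (rule exp_lower_Taylor_quadratic)

lemma num_a:
  assumes ya: "sqrt 3/2 \<le> y" and td: "t * (y - sqrt 3/2)^2 \<le> pi/9" and t0: "0 \<le> t"
  shows "t * (d1 0 0 y)^2 \<le> 21/100"
proof -
  have s3: "sqrt 3 * sqrt 3 = 3" by simp
  have "0 < sqrt 3/2" by simp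
  then have y0: "0 < y" using ya by linarith
  define gg where "gg = (2*y + sqrt 3) * (4*y^2 + 1) / (32 * y^4)"
  have h1: "(y - sqrt 3/2) * (2*y + sqrt 3) = 2*y^2 - 3/2"
    using s3 by (simp add: algebra_simps power2_eq_square)
  have D1: "d1 0 0 y = (y - sqrt 3/2) * gg"
  proof -
    have "(y - sqrt 3/2) * gg = ((y - sqrt 3/2) * (2*y + sqrt 3)) * (4*y^2 + 1) / (32 * y^4)"
      unfolding gg_def by (simp add: algebra_simps)
    also have "\<dots> = (2*y^2 - 3/2) * (4*y^2 + 1) / (32 * y^4)" by (simp only: h1)
    also have "\<dots> = d1 0 0 y"
      unfolding d1_def AA_def mm_def using y0 by (simp add: field_simps power2_eq_square power4_eq_xxxx; simp add: algebra_simps)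
    finally show ?thesis by simp
  qed
  have yy: "3/4 \<le> y^2"
  proof -
    have "(sqrt 3/2)^2 \<le> y^2" using ya by (intro power_mono) auto
    then show ?thesis by (simp add: power_divide)
  qed
  have gg0: "0 \<le> gg" unfolding gg_def using y0 by simp
  have gg1: "gg \<le> 2 / (3*y)"
  proof -
    have a: "2*y + sqrt 3 \<le> 4*y" using ya by linarith
    have b: "4*y^2 + 1 \<le> 16*y^2/3" using yy by linarith
    have "(2*y + sqrt 3) * (4*y^2 + 1) \<le> (4*y) * (16*y^2/3)"
      using a b y0 by (intro mult_mono) auto
    then have "gg \<le> (4*y) * (16*y^2/3) / (32 * y^4)" unfolding gg_def by (rule divide_right_mono) (use y0 in simp)
    also have "\<dots> = 2 / (3*y)" using y0 by (simp add: field_simps power2_eq_square power4_eq_xxxx)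
    finally show ?thesis .
  qed
  have gg2: "gg^2 \<le> 16/27"
  proof -
    have "gg^2 \<le> (2/(3*y))^2" using gg0 gg1 by (intro power_mono) auto
    also have "\<dots> = 4 / (9 * y^2)" by (simp add: power_divide power2_eq_square)
    also have "\<dots> \<le> 16/27" using yy y0 by (simp add: field_simps)
    finally show ?thesis .
  qed
  have "t * (d1 0 0 y)^2 = (t * (y - sqrt 3/2)^2) * gg^2" unfolding D1 by (simp add: power_mult_distrib)
  also have "\<dots> \<le> (pi/9) * (16/27)" using td gg2 t0 by (intro mult_mono) auto
  also have "\<dots> \<le> 21/100"
  proof -
    have "pi \<le> 31416/10000" using pi_approx(2) by simp
    then show ?thesis by simp
  qed
  finally show ?thesis .
qed

lemma num_b:
  assumes y0: "0 < y" and yb: "y \<le> 1003/1000"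
  shows "42/100 \<le> d2 0 0 y"
proof -
  define w where "w = 1/y"
  have w1: "1000/1003 \<le> w" unfolding w_def using y0 yb by (simp add: field_simps)
  have w3: "(1000/1003)^3 \<le> w^3" using w1 by (intro power_mono) auto
  have w5: "(1000/1003)^5 \<le> w^5" using w1 by (intro power_mono) auto
  have "d2 0 0 y = w^3/4 + 3 * w^5/16"
    unfolding d2_def AA_def mm_def w_def using y0 by (simp add: field_simps power_one_over)
  moreover have "(42/100::real) \<le> (1000/1003)^3/4 + 3 * (1000/1003)^5/16" by (simp add: power_divide)
  ultimately show ?thesis using w3 w5 by linarith
qed

lemma num_c:
  assumes t: "6*pi \<le> t"
  shows "t * exp (-(15*t/32)) \<le> 1/50"
proof -
  have p314: "314/100 \<le> pi" using pi_approx(1) by simp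
  have t1: "1884/100 \<le> t" using t p314 by linarith
  have t0: "0 < t" using t1 by simp
  have e1: "t/4 \<le> exp (t/8)"
  proof -
    have "1 + t/8 + (t/8)^2/2 \<le> exp (t/8)" using t0 by (intro exp_quad_ge) auto
    moreover have "t/4 \<le> 1 + t/8 + (t/8)^2/2"
    proof -
      have "0 \<le> (t/8 - 1)^2" by simp
      then show ?thesis by (simp add: power2_eq_square algebra_simps)
    qed
    ultimately show ?thesis by linarith
  qed
  have e2: "200 \<le> exp (11*t/32)"
  proof -
    define x where "x = 11*t/128"
    have x1: "1619/1000 \<le> x" unfolding x_def using t1 by simp
    have xx: "(1619/1000)^2 \<le> x^2" using x1 by (intro power_mono) auto
    have "1 + x + x^2/2 \<le> exp x" using x1 by (intro exp_quad_ge) auto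
    then have ex: "39/10 \<le> exp x" using x1 xx by (simp add: power2_eq_square) linarith?
    have "(39/10)^4 \<le> (exp x)^4" using ex by (intro power_mono) auto
    also have "(exp x)^4 = exp (11*t/32)" unfolding x_def by (simp flip: exp_of_nat_mult)
    finally have "(39/10)^4 \<le> exp (11*t/32)" .
    moreover have "(200::real) \<le> (39/10)^4" by (simp add: power_divide)
    ultimately show ?thesis by linarith
  qed
  have prod: "50 * t \<le> exp (t/8) * exp (11*t/32)"
  proof -
    have "(t/4) * 200 \<le> exp (t/8) * exp (11*t/32)" using e1 e2 t0 by (intro mult_mono) auto
    then show ?thesis by simp
  qed
  have "exp (-(15*t/32)) = 1 / (exp (t/8) * exp (11*t/32))"
    by (simp add: exp_minus inverse_eq_divide flip: exp_add)
  then have "t * exp (-(15*t/32)) = t / (exp (t/8) * exp (11*t/32))" by simp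
  also have "\<dots> \<le> 1/50" using prod by (simp add: divide_le_eq)
  finally show ?thesis .
qed

lemma num_d:
  assumes t: "6*pi \<le> t"
  shows "0 \<le> exp (-(3*t/32))" "exp (-(3*t/32)) \<le> 1/4"
    "((1 + exp (-(3*t/32))) / (1 - exp (-(3*t/32))))^2 \<le> 25/9"
proof -
  have p314: "314/100 \<le> pi" using pi_approx(1) by simp
  have t1: "1884/100 \<le> t" using t p314 by linarith
  define x where "x = 3*t/32"
  have x1: "1766/1000 \<le> x" unfolding x_def using t1 by simp
  have xx: "(1766/1000)^2 \<le> x^2" using x1 by (intro power_mono) auto
  have "1 + x + x^2/2 \<le> exp x" using x1 by (intro exp_quad_ge) auto
  moreover have "(1766/1000::real)^2 = 3118756/1000000" by (simp add: power_divide)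
  ultimately have ex: "4 \<le> exp x" using x1 xx by linarith
  define r where "r = exp (-(3*t/32))"
  have r: "r = 1 / exp x" unfolding r_def x_def by (simp add: exp_minus inverse_eq_divide)
  have r0: "0 \<le> r" unfolding r_def by simp
  have r1: "r \<le> 1/4" unfolding r using ex by (simp add: divide_le_eq)
  show "0 \<le> exp (-(3*t/32))" by simp
  show "exp (-(3*t/32)) \<le> 1/4" using r1 unfolding r_def .
  have G0: "0 \<le> (1 + r) / (1 - r)" using r0 r1 by simp
  have G1: "(1 + r) / (1 - r) \<le> 5/3" using r0 r1 by (simp add: divide_le_eq)
  have "((1 + r) / (1 - r))^2 \<le> (5/3)^2" using G0 G1 by (intro power_mono) auto
  then show "((1 + exp (-(3*t/32))) / (1 - exp (-(3*t/32))))^2 \<le> 25/9" unfolding r_def by (simp add: power_divide)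
qed

lemma key_neg:
  assumes t: "6*pi \<le> t" and ya: "sqrt 3/2 \<le> y" and yb: "y \<le> 1003/1000"
    and td: "t*(y - sqrt 3/2)^2 \<le> pi/9"
  shows "(\<Sum>\<^sub>\<infinity>p. U2 t p y) < 0"
proof -
  have p314: "314/100 \<le> pi" using pi_approx(1) by simp
  have t1: "1884/100 \<le> t" using t p314 by linarith
  have t0: "0 < t" using t1 by simp
  have y0: "0.8 < y" using ya sqrt3_bounds by linarith
  have yp: "0 < y" using y0 by simp
  have y1: "4/5 \<le> y" using y0 by simp
  have y2: "y \<le> 11/10" using yb by simp
  define Main :: "(int \<times> int) set" where "Main = {(0,0),(-1,0),(0,-1)}"
  define \<rho> where "\<rho> = exp(-(3*t/32))"
  define g where "g = (\<lambda>p::int\<times>int. case p of (k,l) \<Rightarrow> \<rho>^nat \<bar>k\<bar> * \<rho>^nat \<bar>l\<bar>)"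
  define G where "G = (1+\<rho>)/(1-\<rho>)"
  define E0 where "E0 = exp(-t*phi 0 0 y)"
  define B where "B = 10*t^2*E0*exp(-15*t/32)"
  have r0: "0 \<le> \<rho>" unfolding \<rho>_def by simp
  have r1: "\<rho> < 1" unfolding \<rho>_def using t0 by simp
  have hg: "(g has_sum G^2) UNIV" unfolding g_def G_def using has_sum_geom_int2[OF r0 r1] by simp
  have hBg: "((\<lambda>p. B * g p) has_sum (B * G^2)) UNIV" using has_sum_cmult_right[OF hg] by simp
  have sBg: "(\<lambda>p. B * g p) summable_on UNIV" using hBg by (rule has_sum_imp_summable)
  have g0: "\<And>p. 0 \<le> g p" unfolding g_def using r0 by (auto simp: case_prod_unfold)
  have E00: "0 < E0" unfolding E0_def by simp
  have B0: "0 \<le> B" unfolding B_def using E00 by simp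
  have sU: "(\<lambda>p. U2 t p y) summable_on UNIV"
  proof -
    have "(\<lambda>p. norm (U2 t p y)) summable_on UNIV"
      by (rule Infinite_Sum.abs_summable_on_comparison_test'[OF MM_summable[OF t0]])
         (use U_bounds(3)[OF t0 y1 y2] in simp)
    then show ?thesis by (rule abs_summable_summable)
  qed
  have fin: "finite Main" unfolding Main_def by simp
  have split: "(\<Sum>\<^sub>\<infinity>p. U2 t p y) = (\<Sum>\<^sub>\<infinity>p\<in>Main. U2 t p y) + (\<Sum>\<^sub>\<infinity>p\<in>-Main. U2 t p y)"
  proof -
    have "(\<Sum>\<^sub>\<infinity>p\<in>Main \<union> -Main. U2 t p y) = (\<Sum>\<^sub>\<infinity>p\<in>Main. U2 t p y) + (\<Sum>\<^sub>\<infinity>p\<in>-Main. U2 t p y)"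
      by (rule infsum_Un_disjoint) (use fin summable_on_subset_banach[OF sU] in auto)
    then show ?thesis by simp
  qed
  have mainsum: "(\<Sum>\<^sub>\<infinity>p\<in>Main. U2 t p y) = 3 * U2 t (0,0) y"
    using fin main_terms[OF yp, of t] unfolding Main_def by simp
  have U00: "U2 t (0,0) y = (t^2*(d1 0 0 y)^2 - t*d2 0 0 y)*E0" unfolding U2_def E0_def by simp
  have oth: "(\<Sum>\<^sub>\<infinity>p\<in>-Main. U2 t p y) \<le> B * G^2"
  proof -
    have "(\<Sum>\<^sub>\<infinity>p\<in>-Main. U2 t p y) \<le> (\<Sum>\<^sub>\<infinity>p\<in>-Main. B * g p)"
    proof (rule infsum_mono)
      show "(\<lambda>p. U2 t p y) summable_on - Main" using summable_on_subset_banach[OF sU] by simp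
      show "(\<lambda>p. B * g p) summable_on - Main" using summable_on_subset_banach[OF sBg] by simp
      fix p assume "p \<in> - Main"
      then have "p \<notin> {(0,0),(-1,0),(0,-1)}" unfolding Main_def by simp
      from others_bound[OF _ ya yb this, of t] t1
      show "U2 t p y \<le> B * g p" unfolding B_def g_def \<rho>_def E0_def by simp
    qed
    also have "\<dots> \<le> (\<Sum>\<^sub>\<infinity>p. B * g p)"
      by (rule infsum_mono_neutral) (use summable_on_subset_banach[OF sBg] sBg B0 g0 in auto)
    also have "\<dots> = B * G^2" using hBg by (rule infsumI)
    finally show ?thesis .
  qed
  define c where "c = t * exp (-(15*t/32))"
  have a1: "t * (d1 0 0 y)^2 \<le> 21/100" using num_a[OF ya td] t0 by simp
  have b1: "42/100 \<le> d2 0 0 y" using num_b[OF yp yb] .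
  have c1: "c \<le> 1/50" unfolding c_def using num_c[OF t] .
  have c0: "0 \<le> c" unfolding c_def using t0 by simp
  have d1': "G^2 \<le> 25/9" unfolding G_def \<rho>_def using num_d(3)[OF t] .
  have cg: "c * G^2 \<le> (1/50) * (25/9)" using c1 d1' c0 by (intro mult_mono) auto
  have br: "3*(t*(d1 0 0 y)^2) - 3*(d2 0 0 y) + 10*(c * G^2) < 0" using a1 b1 cg by linarith
  have ident: "3 * ((t^2*(d1 0 0 y)^2 - t*d2 0 0 y)*E0) + B * G^2 =
      (t*E0) * (3*(t*(d1 0 0 y)^2) - 3*(d2 0 0 y) + 10*(c * G^2))"
    unfolding B_def c_def by (simp add: algebra_simps power2_eq_square)
  have tE: "0 < t*E0" using t0 E00 by simp
  have "(\<Sum>\<^sub>\<infinity>p. U2 t p y) \<le> 3 * ((t^2*(d1 0 0 y)^2 - t*d2 0 0 y)*E0) + B * G^2"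
    using split mainsum U00 oth by simp
  also have "\<dots> < 0" unfolding ident using tE br by (rule mult_pos_neg)
  finally show ?thesis .
qed

theorem mainTheorem16:
  fixes \<alpha> y :: real
  assumes "\<alpha> \<ge> 6"
    and "sqrt 3 / 2 \<le> y" and "y \<le> sqrt 3 / 2 + 1 / (3 * sqrt \<alpha>)"
  shows "deriv (deriv (f_alpha \<alpha>)) y < 0"
proof -
  note a6 = assms(1) and ya = assms(2) and yb0 = assms(3)
  define t where "t = pi * \<alpha>"
  have t6: "6*pi \<le> t" unfolding t_def using a6 by simp
  have t0: "0 < t" unfolding t_def using a6 by simp
  have s6: "2449/1000 \<le> sqrt \<alpha>"
  proof -
    have "sqrt ((2449/1000)^2) \<le> sqrt \<alpha>" using a6 by (subst real_sqrt_le_iff) (simp add: power2_eq_square)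
    then show ?thesis by simp
  qed
  have sa0: "0 < sqrt \<alpha>" using a6 by simp
  have inv: "1 / (3 * sqrt \<alpha>) \<le> 1 / (3 * (2449/1000))"
    using s6 a6 by (intro divide_left_mono) auto
  have yb: "y \<le> 1003/1000" using yb0 inv sqrt3_bounds by simp
  have dy0: "0 \<le> y - sqrt 3/2" using ya by simp
  have dy1: "y - sqrt 3/2 \<le> 1 / (3 * sqrt \<alpha>)" using yb0 by simp
  have td: "t*(y - sqrt 3/2)^2 \<le> pi/9"
  proof -
    have "(y - sqrt 3/2)^2 \<le> (1 / (3 * sqrt \<alpha>))^2" using dy0 dy1 by (intro power_mono) auto
    also have "\<dots> = 1 / (9 * \<alpha>)" using a6 by (simp add: power_divide power_mult_distrib)
    finally have "\<alpha> * (y - sqrt 3/2)^2 \<le> \<alpha> * (1 / (9 * \<alpha>))" using a6 by (intro mult_left_mono) auto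
    also have "\<dots> = 1/9" using a6 by simp
    finally have "\<alpha> * (y - sqrt 3/2)^2 \<le> 1/9" .
    then have "pi * (\<alpha> * (y - sqrt 3/2)^2) \<le> pi * (1/9)" by (intro mult_left_mono) auto
    then show ?thesis unfolding t_def by (simp add: algebra_simps)
  qed
  define S :: "real set" where "S = {4/5<..<11/10}"
  have Sopen: "open S" unfolding S_def by simp
  have Sconv: "convex S" unfolding S_def by simp
  have S_in: "\<And>x. x \<in> S \<Longrightarrow> 4/5 \<le> x \<and> x \<le> 11/10 \<and> 0 < x" unfolding S_def by auto
  have yS: "y \<in> S" unfolding S_def using ya yb sqrt3_bounds by auto
  have fa: "f_alpha \<alpha> = (\<lambda>y. \<Sum>\<^sub>\<infinity>p. U t p y)"
    by (rule ext) (simp add: f_alpha_def U_def t_def case_prod_unfold)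
  have D1: "((\<lambda>y. \<Sum>\<^sub>\<infinity>p. U t p y) has_real_derivative (\<Sum>\<^sub>\<infinity>p. U1 t p x)) (at x)" if x: "x \<in> S" for x
    by (rule deriv_infsum[OF Sopen Sconv _ _ _ MM_summable[OF t0] x])
       (use S_in U_deriv U_bounds[OF t0] in auto)
  have D2: "((\<lambda>y. \<Sum>\<^sub>\<infinity>p. U1 t p y) has_real_derivative (\<Sum>\<^sub>\<infinity>p. U2 t p y)) (at y)"
    by (rule deriv_infsum[OF Sopen Sconv _ _ _ MM_summable[OF t0] yS])
       (use S_in U1_deriv U_bounds[OF t0] in auto)
  have dd: "(\<Sum>\<^sub>\<infinity>p. U1 t p x) = deriv (f_alpha \<alpha>) x" if "x \<in> S" for x
    using DERIV_imp_deriv[OF D1[OF that]] by (simp add: fa)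
  have "(deriv (f_alpha \<alpha>) has_real_derivative (\<Sum>\<^sub>\<infinity>p. U2 t p y)) (at y)"
    by (rule has_field_derivative_transform_within_open[OF D2 Sopen yS]) (use dd in simp)
  then have "deriv (deriv (f_alpha \<alpha>)) y = (\<Sum>\<^sub>\<infinity>p. U2 t p y)" by (rule DERIV_imp_deriv)
  also have "\<dots> < 0" by (rule key_neg[OF t6 ya yb td])
  finally show ?thesis .
qed

end
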